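(* Let $I$ be a stable matching instance with $k$-range preferences and $n$ men and $n$ women. Then each agent in $I$ has at most $5k - 4$ stable partners. In particular, each agent can appear in at most $5k - 5$ rotations.
   Context: An SM instance $I$ has men and women with complete strict preference lists; $P_a(b)$ is the rank $a$ assigns $b$. For an agent $a$, $\min\mathrm{rank}(a)$ and $\max\mathrm{rank}(a)$ are the minimum and maximum of $P_b(a)$ over agents $b$ of the opposite sex; $I$ has $k$-range preferences if $\max\mathrm{rank}(a) - \min\mathrm{rank}(a) \leq k-1$ for all $a$. A stable partner of $a$ is an agent matched to $a$ in some stable matching. A rotation of $I$ is a circular list $(m_1,w_1),\ldots,(m_\ell,w_\ell)$ of pairs of some stable matching $\mu$ such that $w_{i+1}$ is the first woman after $w_i$ on $m_i$'s list who prefers $m_i$ to her partner $m_{i+1}$ in $\mu$. *)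

theory Defs
  imports Main
begin

text \<open>Men and women are both represented by 0..<n. A preference profile P assigns to
  every agent a (below n) a bijection P a from the agents of the opposite sex {..<n}
  onto the ranks {1..n}: P a b is the rank that a assigns to b (smaller = better).\<close>

definition pref_profile :: "nat \<Rightarrow> (nat \<Rightarrow> nat \<Rightarrow> nat) \<Rightarrow> bool" where
  "pref_profile n P \<longleftrightarrow> (\<forall>a<n. bij_betw (P a) {..<n} {1..n})"

definition minrank_man :: "nat \<Rightarrow> (nat \<Rightarrow> nat \<Rightarrow> nat) \<Rightarrow> nat \<Rightarrow> nat" where
  "minrank_man n pw m = Min ((\<lambda>w. pw w m) ` {..<n})"
definition maxrank_man :: "nat \<Rightarrow> (nat \<Rightarrow> nat \<Rightarrow> nat) \<Rightarrow> nat \<Rightarrow> nat" where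
  "maxrank_man n pw m = Max ((\<lambda>w. pw w m) ` {..<n})"
definition minrank_woman :: "nat \<Rightarrow> (nat \<Rightarrow> nat \<Rightarrow> nat) \<Rightarrow> nat \<Rightarrow> nat" where
  "minrank_woman n pm w = Min ((\<lambda>m. pm m w) ` {..<n})"
definition maxrank_woman :: "nat \<Rightarrow> (nat \<Rightarrow> nat \<Rightarrow> nat) \<Rightarrow> nat \<Rightarrow> nat" where
  "maxrank_woman n pm w = Max ((\<lambda>m. pm m w) ` {..<n})"

definition k_range :: "nat \<Rightarrow> (nat \<Rightarrow> nat \<Rightarrow> nat) \<Rightarrow> (nat \<Rightarrow> nat \<Rightarrow> nat) \<Rightarrow> nat \<Rightarrow> bool" where
  "k_range n pm pw k \<longleftrightarrow>
     (\<forall>m<n. int (maxrank_man n pw m) - int (minrank_man n pw m) \<le> int k - 1) \<and>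
     (\<forall>w<n. int (maxrank_woman n pm w) - int (minrank_woman n pm w) \<le> int k - 1)"

text \<open>A (perfect) matching: mu m is the partner of man m; a bijection men -> women.\<close>
definition matching :: "nat \<Rightarrow> (nat \<Rightarrow> nat) \<Rightarrow> bool" where
  "matching n mu \<longleftrightarrow> bij_betw mu {..<n} {..<n}"

definition wpartner :: "nat \<Rightarrow> (nat \<Rightarrow> nat) \<Rightarrow> nat \<Rightarrow> nat" where
  "wpartner n mu w = inv_into {..<n} mu w"

definition blocking :: "nat \<Rightarrow> (nat \<Rightarrow> nat \<Rightarrow> nat) \<Rightarrow> (nat \<Rightarrow> nat \<Rightarrow> nat) \<Rightarrow> (nat \<Rightarrow> nat)
    \<Rightarrow> nat \<Rightarrow> nat \<Rightarrow> bool" where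
  "blocking n pm pw mu m w \<longleftrightarrow> m < n \<and> w < n \<and>
     pm m w < pm m (mu m) \<and> pw w m < pw w (wpartner n mu w)"

definition stable :: "nat \<Rightarrow> (nat \<Rightarrow> nat \<Rightarrow> nat) \<Rightarrow> (nat \<Rightarrow> nat \<Rightarrow> nat) \<Rightarrow> (nat \<Rightarrow> nat) \<Rightarrow> bool" where
  "stable n pm pw mu \<longleftrightarrow> matching n mu \<and> (\<nexists>m w. blocking n pm pw mu m w)"

definition stable_partners_man :: "nat \<Rightarrow> (nat \<Rightarrow> nat \<Rightarrow> nat) \<Rightarrow> (nat \<Rightarrow> nat \<Rightarrow> nat) \<Rightarrow> nat \<Rightarrow> nat set" where
  "stable_partners_man n pm pw m = {w. \<exists>mu. stable n pm pw mu \<and> mu m = w}"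

definition stable_partners_woman :: "nat \<Rightarrow> (nat \<Rightarrow> nat \<Rightarrow> nat) \<Rightarrow> (nat \<Rightarrow> nat \<Rightarrow> nat) \<Rightarrow> nat \<Rightarrow> nat set" where
  "stable_partners_woman n pm pw w = {m. m < n \<and> (\<exists>mu. stable n pm pw mu \<and> mu m = w)}"

text \<open>ps = [(m_1,w_1),...,(m_l,w_l)] (indices read cyclically) is a rotation exposed in the
  stable matching mu: its pairs are distinct pairs of mu and w_{i+1} is the first woman after
  w_i on m_i's list who prefers m_i to her partner (m_{i+1}) in mu.\<close>
definition rotation_in :: "nat \<Rightarrow> (nat \<Rightarrow> nat \<Rightarrow> nat) \<Rightarrow> (nat \<Rightarrow> nat \<Rightarrow> nat) \<Rightarrow> (nat \<Rightarrow> nat)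
    \<Rightarrow> (nat \<times> nat) list \<Rightarrow> bool" where
  "rotation_in n pm pw mu ps \<longleftrightarrow> stable n pm pw mu \<and> ps \<noteq> [] \<and> distinct (map fst ps) \<and>
     (\<forall>i<length ps. fst (ps ! i) < n \<and> mu (fst (ps ! i)) = snd (ps ! i)) \<and>
     (\<forall>i<length ps.
        let m = fst (ps ! i); w = snd (ps ! i); w' = snd (ps ! (Suc i mod length ps)) in
          pm m w < pm m w' \<and> pw w' m < pw w' (wpartner n mu w') \<and>
          (\<forall>v<n. pm m w < pm m v \<and> pw v m < pw v (wpartner n mu v) \<longrightarrow> pm m w' \<le> pm m v))"

text \<open>A rotation, identified with its set of pairs (the circular list up to rotation).\<close>
definition rotation :: "nat \<Rightarrow> (nat \<Rightarrow> nat \<Rightarrow> nat) \<Rightarrow> (nat \<Rightarrow> nat \<Rightarrow> nat) \<Rightarrow> (nat \<times> nat) set \<Rightarrow> bool" where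
  "rotation n pm pw R \<longleftrightarrow> (\<exists>mu ps. rotation_in n pm pw mu ps \<and> set ps = R)"

end

theory Submission
  imports Defs
begin


locale SM =
  fixes n :: nat and pm pw :: "nat \<Rightarrow> nat \<Rightarrow> nat" and k :: nat
  assumes pmP: "pref_profile n pm" and pwP: "pref_profile n pw" and kr: "k_range n pm pw k"
begin

abbreviation "A x \<equiv> minrank_man n pw x"
abbreviation "B v \<equiv> minrank_woman n pm v"

lemma pm_bij: "x < n \<Longrightarrow> bij_betw (pm x) {..<n} {1..n}"
  using pmP unfolding pref_profile_def by auto
lemma pw_bij: "x < n \<Longrightarrow> bij_betw (pw x) {..<n} {1..n}"
  using pwP unfolding pref_profile_def by auto

lemma pm_inj: "x < n \<Longrightarrow> v < n \<Longrightarrow> v' < n \<Longrightarrow> pm x v = pm x v' \<Longrightarrow> v = v'"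
proof -
  assume a: "x < n" "v < n" "v' < n" "pm x v = pm x v'"
  have "inj_on (pm x) {..<n}" using pm_bij[OF a(1)] by (rule bij_betw_imp_inj_on)
  then show ?thesis using a by (auto dest: inj_onD)
qed
lemma pw_inj: "x < n \<Longrightarrow> v < n \<Longrightarrow> v' < n \<Longrightarrow> pw x v = pw x v' \<Longrightarrow> v = v'"
proof -
  assume a: "x < n" "v < n" "v' < n" "pw x v = pw x v'"
  have "inj_on (pw x) {..<n}" using pw_bij[OF a(1)] by (rule bij_betw_imp_inj_on)
  then show ?thesis using a by (auto dest: inj_onD)
qed
lemma pm_range: "x < n \<Longrightarrow> v < n \<Longrightarrow> 1 \<le> pm x v \<and> pm x v \<le> n"
proof -
  assume a: "x < n" "v < n"
  have "pm x v \<in> {1..n}" using bij_betw_apply[OF pm_bij[OF a(1)]] a(2) by auto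
  then show ?thesis by auto
qed
lemma pw_range: "x < n \<Longrightarrow> v < n \<Longrightarrow> 1 \<le> pw x v \<and> pw x v \<le> n"
proof -
  assume a: "x < n" "v < n"
  have "pw x v \<in> {1..n}" using bij_betw_apply[OF pw_bij[OF a(1)]] a(2) by auto
  then show ?thesis by auto
qed

lemma A_le: "x < n \<Longrightarrow> v < n \<Longrightarrow> A x \<le> pw v x"
  unfolding minrank_man_def by (rule Min_le) auto
lemma B_le: "x < n \<Longrightarrow> v < n \<Longrightarrow> B v \<le> pm x v"
  unfolding minrank_woman_def by (rule Min_le) auto
lemma A_ex: "x < n \<Longrightarrow> \<exists>v<n. A x = pw v x"
proof -
  assume "x < n"
  then have "A x \<in> (\<lambda>w. pw w x) ` {..<n}" unfolding minrank_man_def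
    by (intro Min_in) auto
  then show ?thesis by auto
qed
lemma B_ex: "v < n \<Longrightarrow> \<exists>x<n. B v = pm x v"
proof -
  assume "v < n"
  then have "B v \<in> (\<lambda>m. pm m v) ` {..<n}" unfolding minrank_woman_def
    by (intro Min_in) auto
  then show ?thesis by auto
qed
lemma A_pos: "x < n \<Longrightarrow> 1 \<le> A x"
  using A_ex pw_range by (metis le_trans)
lemma B_pos: "v < n \<Longrightarrow> 1 \<le> B v"
  using B_ex pm_range by (metis le_trans)

lemma pw_le_A: "x < n \<Longrightarrow> v < n \<Longrightarrow> int (pw v x) \<le> int (A x) + int k - 1"
proof -
  assume a: "x < n" "v < n"
  have "pw v x \<le> maxrank_man n pw x" unfolding maxrank_man_def
    by (rule Max_ge) (use a in auto)
  moreover have "int (maxrank_man n pw x) - int (A x) \<le> int k - 1"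
    using kr a unfolding k_range_def by auto
  ultimately show ?thesis by linarith
qed
lemma pm_le_B: "x < n \<Longrightarrow> v < n \<Longrightarrow> int (pm x v) \<le> int (B v) + int k - 1"
proof -
  assume a: "x < n" "v < n"
  have "pm x v \<le> maxrank_woman n pm v" unfolding maxrank_woman_def
    by (rule Max_ge) (use a in auto)
  moreover have "int (maxrank_woman n pm v) - int (B v) \<le> int k - 1"
    using kr a unfolding k_range_def by auto
  ultimately show ?thesis by linarith
qed
lemma k_pos: "x < n \<Longrightarrow> 1 \<le> k"
  using pw_le_A[of x x] A_le[of x x] by linarith

lemma match_facts:
  assumes "matching n mu"
  shows "x < n \<Longrightarrow> mu x < n"
    and "v < n \<Longrightarrow> wpartner n mu v < n"
    and "v < n \<Longrightarrow> mu (wpartner n mu v) = v"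
    and "x < n \<Longrightarrow> wpartner n mu (mu x) = x"
    and "x < n \<Longrightarrow> y < n \<Longrightarrow> mu x = mu y \<Longrightarrow> x = y"
proof -
  have b: "bij_betw mu {..<n} {..<n}" using assms unfolding matching_def .
  show "x < n \<Longrightarrow> mu x < n" using b bij_betw_apply by fastforce
  show "v < n \<Longrightarrow> wpartner n mu v < n" unfolding wpartner_def
    using b by (metis bij_betw_def inv_into_into lessThan_iff)
  show "v < n \<Longrightarrow> mu (wpartner n mu v) = v" unfolding wpartner_def
    using b by (metis bij_betw_def f_inv_into_f lessThan_iff)
  show "x < n \<Longrightarrow> wpartner n mu (mu x) = x" unfolding wpartner_def
    using b by (metis bij_betw_def inv_into_f_f lessThan_iff)
  show "x < n \<Longrightarrow> y < n \<Longrightarrow> mu x = mu y \<Longrightarrow> x = y"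
    using b by (metis bij_betw_def inj_onD lessThan_iff)
qed

lemma stable_nb:
  assumes "stable n pm pw mu" "x < n" "v < n" "pm x v < pm x (mu x)"
  shows "pw v (wpartner n mu v) \<le> pw v x"
  using assms unfolding stable_def blocking_def by force

lemma card_below:
  assumes "x < n" "r \<le> n + 1"
  shows "card {v. v < n \<and> pm x v < r} = r - 1"
proof -
  let ?S = "{v. v < n \<and> pm x v < r}"
  have "pm x ` ?S = {1..<r}"
  proof
    show "pm x ` ?S \<subseteq> {1..<r}" using pm_range assms by auto
    show "{1..<r} \<subseteq> pm x ` ?S"
    proof
      fix y assume y: "y \<in> {1..<r}"
      then have "y \<in> {1..n}" using assms by auto
      then obtain v where "v \<in> {..<n}" "pm x v = y"
        using pm_bij[OF assms(1)] by (metis bij_betw_def imageE)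
      then show "y \<in> pm x ` ?S" using y by auto
    qed
  qed
  moreover have "inj_on (pm x) ?S" using pm_inj assms by (auto intro: inj_onI)
  ultimately show ?thesis by (metis card_atLeastLessThan card_image)
qed

lemma card_below_w:
  assumes "x < n" "r \<le> n + 1"
  shows "card {v. v < n \<and> pw x v < r} = r - 1"
proof -
  let ?S = "{v. v < n \<and> pw x v < r}"
  have "pw x ` ?S = {1..<r}"
  proof
    show "pw x ` ?S \<subseteq> {1..<r}" using pw_range assms by auto
    show "{1..<r} \<subseteq> pw x ` ?S"
    proof
      fix y assume y: "y \<in> {1..<r}"
      then have "y \<in> {1..n}" using assms by auto
      then obtain v where "v \<in> {..<n}" "pw x v = y"
        using pw_bij[OF assms(1)] by (metis bij_betw_def imageE)
      then show "y \<in> pw x ` ?S" using y by auto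
    qed
  qed
  moreover have "inj_on (pw x) ?S" using pw_inj assms by (auto intro: inj_onI)
  ultimately show ?thesis by (metis card_atLeastLessThan card_image)
qed

lemma card_men:
  assumes "U \<subseteq> {..<n}" "0 < n" "\<And>u. u \<in> U \<Longrightarrow> \<exists>v<n. int (pw v u) \<le> c"
    "0 \<le> c + int k - 1"
  shows "int (card U) \<le> c + int k - 1"
proof -
  have inj: "inj_on (\<lambda>u. int (pw 0 u)) U"
    using pw_inj[OF assms(2)] assms(1) by (intro inj_onI) (metis lessThan_iff of_nat_eq_iff subsetD)
  have sub: "(\<lambda>u. int (pw 0 u)) ` U \<subseteq> {1 .. c + int k - 1}"
  proof
    fix y assume "y \<in> (\<lambda>u. int (pw 0 u)) ` U"
    then obtain u where u: "u \<in> U" "y = int (pw 0 u)" by auto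
    then have un: "u < n" using assms(1) by auto
    obtain v where v: "v < n" "int (pw v u) \<le> c" using assms(3)[OF u(1)] by auto
    have "A u \<le> pw v u" using A_le un v by auto
    moreover have "int (pw 0 u) \<le> int (A u) + int k - 1" using pw_le_A un assms(2) by auto
    moreover have "1 \<le> pw 0 u" using pw_range un assms(2) by auto
    ultimately show "y \<in> {1 .. c + int k - 1}" using u v by auto
  qed
  have "card U \<le> card {1 .. c + int k - 1}"
    by (rule card_inj_on_le[OF inj sub]) auto
  then show ?thesis using assms(4) by auto
qed

lemma card_women:
  assumes "U \<subseteq> {..<n}" "0 < n" "\<And>u. u \<in> U \<Longrightarrow> \<exists>x<n. int (pm x u) \<le> c"
    "0 \<le> c + int k - 1"
  shows "int (card U) \<le> c + int k - 1"
proof -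
  have inj: "inj_on (\<lambda>u. int (pm 0 u)) U"
    using pm_inj[OF assms(2)] assms(1) by (intro inj_onI) (metis lessThan_iff of_nat_eq_iff subsetD)
  have sub: "(\<lambda>u. int (pm 0 u)) ` U \<subseteq> {1 .. c + int k - 1}"
  proof
    fix y assume "y \<in> (\<lambda>u. int (pm 0 u)) ` U"
    then obtain u where u: "u \<in> U" "y = int (pm 0 u)" by auto
    then have un: "u < n" using assms(1) by auto
    obtain v where v: "v < n" "int (pm v u) \<le> c" using assms(3)[OF u(1)] by auto
    have "B u \<le> pm v u" using B_le un v by auto
    moreover have "int (pm 0 u) \<le> int (B u) + int k - 1" using pm_le_B un assms(2) by auto
    moreover have "1 \<le> pm 0 u" using pm_range un assms(2) by auto
    ultimately show "y \<in> {1 .. c + int k - 1}" using u v by auto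
  qed
  have "card U \<le> card {1 .. c + int k - 1}"
    by (rule card_inj_on_le[OF inj sub]) auto
  then show ?thesis using assms(4) by auto
qed

end

context SM begin

lemma ub_man:
  assumes st: "stable n pm pw mu" and x: "x < n"
  shows "int (pm x (mu x)) \<le> int (A x) + 2 * int k - 2"
proof -
  have mt: "matching n mu" using st unfolding stable_def by auto
  note mf = match_facts[OF mt]
  define r where "r = pm x (mu x)"
  have r1: "1 \<le> r" "r \<le> n" using pm_range[OF x mf(1)[OF x]] r_def by auto
  define S where "S = {v. v < n \<and> pm x v < r}"
  have cS: "card S = r - 1" unfolding S_def using card_below[OF x] r1 by auto
  define U where "U = wpartner n mu ` S"
  have injU: "inj_on (wpartner n mu) S"
  proof (rule inj_onI)
    fix a b assume "a \<in> S" "b \<in> S" "wpartner n mu a = wpartner n mu b"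
    then show "a = b" using mf(3) unfolding S_def by (metis mem_Collect_eq)
  qed
  have cU: "card U = r - 1" using cS injU card_image U_def by metis
  have Usub: "U \<subseteq> {..<n}" unfolding U_def S_def using mf(2) by auto
  have kp: "1 \<le> k" using k_pos[OF x] .
  have Ap: "1 \<le> A x" using A_pos[OF x] .
  have "int (card U) \<le> (int (A x) + int k - 2) + int k - 1"
  proof (rule card_men[OF Usub])
    show "0 < n" using x by auto
    show "0 \<le> int (A x) + int k - 2 + int k - 1" using kp Ap by linarith
    fix u assume "u \<in> U"
    then obtain v where v: "v \<in> S" "u = wpartner n mu v" unfolding U_def by auto
    have vn: "v < n" and vr: "pm x v < pm x (mu x)" using v(1) unfolding S_def r_def by auto
    have "u \<noteq> x" using v vr mf(3)[OF vn] by auto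
    moreover have "pw v u \<le> pw v x" using stable_nb[OF st x vn vr] v(2) by simp
    moreover have "u < n" using mf(2)[OF vn] v(2) by simp
    ultimately have "pw v u < pw v x" using pw_inj[OF vn] x by (metis le_neq_implies_less)
    moreover have "int (pw v x) \<le> int (A x) + int k - 1" using pw_le_A[OF x vn] .
    ultimately show "\<exists>v<n. int (pw v u) \<le> int (A x) + int k - 2" using vn by (intro exI[of _ v]) auto
  qed
  then show ?thesis using cU r1 r_def by linarith
qed

lemma ub_woman:
  assumes st: "stable n pm pw mu" and v: "v < n"
  shows "int (pw v (wpartner n mu v)) \<le> int (B v) + 2 * int k - 2"
proof -
  have mt: "matching n mu" using st unfolding stable_def by auto
  note mf = match_facts[OF mt]
  define x where "x = wpartner n mu v"
  have xn: "x < n" and mx: "mu x = v" using mf(2,3)[OF v] x_def by auto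
  define r where "r = pw v x"
  have r1: "1 \<le> r" "r \<le> n" using pw_range[OF v xn] r_def by auto
  define S where "S = {y. y < n \<and> pw v y < r}"
  have cS: "card S = r - 1" unfolding S_def
    using card_below_w[OF v] r1 by auto
  define U where "U = mu ` S"
  have injU: "inj_on mu S"
  proof (rule inj_onI)
    fix a b assume "a \<in> S" "b \<in> S" "mu a = mu b"
    then show "a = b" using mf(5) unfolding S_def by (metis mem_Collect_eq)
  qed
  have cU: "card U = r - 1" using cS injU card_image U_def by metis
  have Usub: "U \<subseteq> {..<n}" unfolding U_def S_def using mf(1) by auto
  have kp: "1 \<le> k" using k_pos[OF v] .
  have Bp: "1 \<le> B v" using B_pos[OF v] .
  have "int (card U) \<le> (int (B v) + int k - 2) + int k - 1"
  proof (rule card_women[OF Usub])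
    show "0 < n" using v by auto
    show "0 \<le> int (B v) + int k - 2 + int k - 1" using kp Bp by linarith
    fix u assume "u \<in> U"
    then obtain y where y: "y \<in> S" "u = mu y" unfolding U_def by auto
    have yn: "y < n" and yr: "pw v y < pw v x" using y(1) unfolding S_def r_def by auto
    have "y \<noteq> x" using yr by auto
    then have uv: "u \<noteq> v" using y(2) mx mf(5)[OF yn xn] by auto
    have un: "u < n" using mf(1)[OF yn] y(2) by simp
    have "\<not> (pm y v < pm y u)"
      using st yn v yr y(2) x_def unfolding stable_def blocking_def by blast
    then have "pm y u < pm y v" using pm_inj[OF yn un v] uv by (metis linorder_neqE_nat)
    moreover have "int (pm y v) \<le> int (B v) + int k - 1" using pm_le_B[OF yn v] .
    ultimately show "\<exists>x<n. int (pm x u) \<le> int (B v) + int k - 2" using yn by (intro exI[of _ y]) auto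
  qed
  then have "int r \<le> int (B v) + 2 * int k - 2" using cU r1 by linarith
  then show ?thesis using r_def x_def by simp
qed

end

context SM begin

lemma lb_man:
  assumes st: "stable n pm pw mu" and x: "x < n"
  shows "int (A x) - 2 * int k + 2 \<le> int (pm x (mu x))"
proof -
  have mt: "matching n mu" using st unfolding stable_def by auto
  note mf = match_facts[OF mt]
  have v: "mu x < n" using mf(1)[OF x] .
  have "int (pw (mu x) x) \<le> int (B (mu x)) + 2 * int k - 2"
    using ub_woman[OF st v] mf(4)[OF x] by simp
  moreover have "A x \<le> pw (mu x) x" using A_le[OF x v] .
  moreover have "B (mu x) \<le> pm x (mu x)" using B_le[OF x v] .
  ultimately show ?thesis by linarith
qed

lemma lb_woman:
  assumes st: "stable n pm pw mu" and v: "v < n"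
  shows "int (B v) - 2 * int k + 2 \<le> int (pw v (wpartner n mu v))"
proof -
  have mt: "matching n mu" using st unfolding stable_def by auto
  note mf = match_facts[OF mt]
  define x where "x = wpartner n mu v"
  have xn: "x < n" and mx: "mu x = v" using mf(2,3)[OF v] x_def by auto
  have "int (pm x v) \<le> int (A x) + 2 * int k - 2"
    using ub_man[OF st xn] mx by simp
  moreover have "A x \<le> pw v x" using A_le[OF xn v] .
  moreover have "B v \<le> pm x v" using B_le[OF xn v] .
  ultimately have "int (B v) - 2 * int k + 2 \<le> int (pw v x)" by linarith
  then show ?thesis using x_def by simp
qed

lemma sp_man:
  assumes m: "m < n"
  shows "int (card (stable_partners_man n pm pw m)) \<le> 5 * int k - 4"
proof -
  let ?S = "stable_partners_man n pm pw m"
  let ?f = "\<lambda>v. int (pm m v)"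
  have Sn: "?S \<subseteq> {..<n}" unfolding stable_partners_man_def stable_def
    using match_facts(1) m by auto
  have inj: "inj_on ?f ?S" using pm_inj[OF m] Sn by (intro inj_onI) (simp, blast)
  have sub: "?f ` ?S \<subseteq> {int (A m) - 2 * int k + 2 .. int (A m) + 2 * int k - 2}"
  proof
    fix y assume "y \<in> ?f ` ?S"
    then obtain mu where "stable n pm pw mu" "y = int (pm m (mu m))"
      unfolding stable_partners_man_def by auto
    then show "y \<in> {int (A m) - 2 * int k + 2 .. int (A m) + 2 * int k - 2}"
      using ub_man lb_man m by auto
  qed
  have "card ?S \<le> card {int (A m) - 2 * int k + 2 .. int (A m) + 2 * int k - 2}"
    by (rule card_inj_on_le[OF inj sub]) auto
  then show ?thesis using k_pos[OF m] by auto
qed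

lemma sp_woman:
  assumes w: "w < n"
  shows "int (card (stable_partners_woman n pm pw w)) \<le> 5 * int k - 4"
proof -
  let ?S = "stable_partners_woman n pm pw w"
  let ?f = "\<lambda>x. int (pw w x)"
  have Sn: "?S \<subseteq> {..<n}" unfolding stable_partners_woman_def by auto
  have inj: "inj_on ?f ?S" using pw_inj[OF w] Sn by (intro inj_onI) (simp, blast)
  have sub: "?f ` ?S \<subseteq> {int (B w) - 2 * int k + 2 .. int (B w) + 2 * int k - 2}"
  proof
    fix y assume "y \<in> ?f ` ?S"
    then obtain mu x where st: "stable n pm pw mu" and x: "x < n" "mu x = w" "y = int (pw w x)"
      unfolding stable_partners_woman_def by auto
    have "wpartner n mu w = x" using x match_facts(4)[of mu x] st unfolding stable_def by auto
    then show "y \<in> {int (B w) - 2 * int k + 2 .. int (B w) + 2 * int k - 2}"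
      using ub_woman[OF st w] lb_woman[OF st w] x by auto
  qed
  have "card ?S \<le> card {int (B w) - 2 * int k + 2 .. int (B w) + 2 * int k - 2}"
    by (rule card_inj_on_le[OF inj sub]) auto
  then show ?thesis using k_pos[OF w] by auto
qed

end


definition meet :: "(nat \<Rightarrow> nat \<Rightarrow> nat) \<Rightarrow> (nat \<Rightarrow> nat) \<Rightarrow> (nat \<Rightarrow> nat) \<Rightarrow> nat \<Rightarrow> nat" where
  "meet pm mu mu' x = (if pm x (mu x) \<le> pm x (mu' x) then mu' x else mu x)"

context SM begin

lemma mfs: "stable n pm pw mu \<Longrightarrow> matching n mu" unfolding stable_def by auto

lemma pref_close:
  assumes st: "stable n pm pw mu" and st': "stable n pm pw mu'"
  shows "mu ` {x. x < n \<and> pm x (mu x) < pm x (mu' x)} = mu' ` {x. x < n \<and> pm x (mu x) < pm x (mu' x)}"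
    (is "mu ` ?P = mu' ` ?P")
proof -
  note mf = match_facts[OF mfs[OF st]]
  note mf' = match_facts[OF mfs[OF st']]
  have sub: "mu ` ?P \<subseteq> mu' ` ?P"
  proof
    fix v assume "v \<in> mu ` ?P"
    then obtain x where x: "x < n" "pm x (mu x) < pm x (mu' x)" "v = mu x" by auto
    have vn: "v < n" using mf(1) x by auto
    define y where "y = wpartner n mu' v"
    have yn: "y < n" and my: "mu' y = v" using mf'(2,3)[OF vn] y_def by auto
    have yx: "y \<noteq> x" using my x by auto
    have "pw v y \<le> pw v x" using stable_nb[OF st' x(1) vn] x y_def by simp
    then have vyx: "pw v y < pw v x" using pw_inj[OF vn yn x(1)] yx by (metis le_neq_implies_less)
    have wx: "wpartner n mu v = x" using mf(4)[OF x(1)] x(3) by simp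
    have "\<not> (pm y v < pm y (mu y))"
      using st yn vn vyx wx unfolding stable_def blocking_def by blast
    moreover have "mu y \<noteq> v" using mf(5)[OF yn x(1)] x(3) yx by auto
    ultimately have "pm y (mu y) < pm y (mu' y)" using my pm_inj[OF yn mf(1)[OF yn] vn]
      by (metis linorder_neqE_nat)
    then show "v \<in> mu' ` ?P" using yn my by (intro image_eqI[of _ _ y]) auto
  qed
  have injm: "inj_on mu ?P" using mf(5) by (intro inj_onI) auto
  have injm': "inj_on mu' ?P" using mf'(5) by (intro inj_onI) auto
  have c: "card (mu ` ?P) = card (mu' ` ?P)" using card_image[OF injm] card_image[OF injm'] by simp
  have f: "finite (mu' ` ?P)" by auto
  show ?thesis by (rule card_subset_eq[OF f sub c])
qed

lemma meet_inj_aux: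
  assumes st: "stable n pm pw mu" and st': "stable n pm pw mu'"
    and x1: "x1 < n" and x2: "x2 < n" and c1: "pm x1 (mu x1) \<le> pm x1 (mu' x1)"
    and c2: "pm x2 (mu' x2) < pm x2 (mu x2)" and eq: "mu' x1 = mu x2"
  shows False
proof -
  note mf' = match_facts[OF mfs[OF st']]
  let ?P = "{x. x < n \<and> pm x (mu' x) < pm x (mu x)}"
  have "mu x2 \<in> mu ` ?P" using x2 c2 by auto
  then have "mu x2 \<in> mu' ` ?P" using pref_close[OF st' st] by simp
  then obtain z where z: "z < n" "pm z (mu' z) < pm z (mu z)" "mu' z = mu x2" by auto
  then have "z = x1" using mf'(5)[OF z(1) x1] eq by simp
  then show False using z c1 by simp
qed

lemma meet_facts:
  assumes st: "stable n pm pw mu" and st': "stable n pm pw mu'" and x: "x < n"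
  shows "meet pm mu mu' x < n" "pm x (mu x) \<le> pm x (meet pm mu mu' x)"
    "pm x (mu' x) \<le> pm x (meet pm mu mu' x)"
    "meet pm mu mu' x = mu x \<or> meet pm mu mu' x = mu' x"
  using match_facts(1)[OF mfs[OF st] x] match_facts(1)[OF mfs[OF st'] x]
  unfolding meet_def by auto

lemma meet_inj:
  assumes st: "stable n pm pw mu" and st': "stable n pm pw mu'"
  shows "inj_on (meet pm mu mu') {..<n}"
proof (rule inj_onI)
  fix x1 x2 assume x1: "x1 \<in> {..<n}" and x2: "x2 \<in> {..<n}"
    and eq: "meet pm mu mu' x1 = meet pm mu mu' x2"
  have x1n: "x1 < n" and x2n: "x2 < n" using x1 x2 by auto
  note mf = match_facts[OF mfs[OF st]]
  note mf' = match_facts[OF mfs[OF st']]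
  show "x1 = x2"
  proof (cases "pm x1 (mu x1) \<le> pm x1 (mu' x1)")
    case c1: True
    show ?thesis
    proof (cases "pm x2 (mu x2) \<le> pm x2 (mu' x2)")
      case True
      then have "mu' x1 = mu' x2" using c1 eq by (simp add: meet_def)
      then show ?thesis using mf'(5)[OF x1n x2n] by simp
    next
      case False
      then have "mu' x1 = mu x2" using c1 eq by (simp add: meet_def)
      then show ?thesis using meet_inj_aux[OF st st' x1n x2n c1] False by simp
    qed
  next
    case c1: False
    show ?thesis
    proof (cases "pm x2 (mu x2) \<le> pm x2 (mu' x2)")
      case True
      then have "mu' x2 = mu x1" using c1 eq by (simp add: meet_def)
      then show ?thesis using meet_inj_aux[OF st st' x2n x1n True] c1 by simp
    next
      case False
      then have "mu x1 = mu x2" using c1 eq by (simp add: meet_def)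
      then show ?thesis using mf(5)[OF x1n x2n] by simp
    qed
  qed
qed

lemma meet_matching:
  assumes st: "stable n pm pw mu" and st': "stable n pm pw mu'"
  shows "matching n (meet pm mu mu')"
proof -
  have sub: "meet pm mu mu' ` {..<n} \<subseteq> {..<n}" using meet_facts(1)[OF st st'] by auto
  have "meet pm mu mu' ` {..<n} = {..<n}"
    by (rule endo_inj_surj[OF _ sub meet_inj[OF st st']]) auto
  then show ?thesis unfolding matching_def bij_betw_def using meet_inj[OF st st'] by auto
qed

lemma stable_aux:
  assumes st: "stable n pm pw mu" and st': "stable n pm pw mu'"
    and x: "x < n" and v: "v < n" and y: "y < n"
    and xv: "pm x v < pm x (mu x)" and vxy: "pw v x < pw v y"
    and yv: "mu y = v \<or> mu' y = v" and yle: "pm y (mu y) \<le> pm y v"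
  shows False
proof -
  note mf = match_facts[OF mfs[OF st]]
  note mf' = match_facts[OF mfs[OF st']]
  define z where "z = wpartner n mu v"
  have zn: "z < n" and mz: "mu z = v" using mf(2,3)[OF v] z_def by auto
  have zx: "pw v z \<le> pw v x" using stable_nb[OF st x v xv] z_def by simp
  have zy: "z \<noteq> y" using zx vxy by auto
  have "mu y \<noteq> v" using mf(5)[OF zn y] mz zy by auto
  then have my': "mu' y = v" using yv by simp
  have "pm y (mu y) \<noteq> pm y (mu' y)"
    using pm_inj[OF y mf(1)[OF y] mf'(1)[OF y]] \<open>mu y \<noteq> v\<close> my' by metis
  then have lt: "pm y (mu y) < pm y (mu' y)" using yle my' by simp
  let ?P = "{x. x < n \<and> pm x (mu x) < pm x (mu' x)}"
  have "v \<in> mu' ` ?P" using y lt my' by (intro image_eqI[of _ _ y]) auto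
  then have "v \<in> mu ` ?P" using pref_close[OF st st'] by simp
  then obtain z' where z': "z' < n" "pm z' (mu z') < pm z' (mu' z')" "mu z' = v" by auto
  have "z' = z" using mf(5)[OF z'(1) zn] z'(3) mz by simp
  then have zp: "pm z v < pm z (mu' z)" using z' by simp
  have "pw v (wpartner n mu' v) \<le> pw v z" using stable_nb[OF st' zn v zp] .
  moreover have "wpartner n mu' v = y" using mf'(4)[OF y] my' by simp
  ultimately show False using zx vxy by simp
qed

lemma meet_stable:
  assumes st: "stable n pm pw mu" and st': "stable n pm pw mu'"
  shows "stable n pm pw (meet pm mu mu')"
proof -
  let ?X = "meet pm mu mu'"
  have mX: "matching n ?X" using meet_matching[OF st st'] .
  note mfX = match_facts[OF mX]
  have "\<not> blocking n pm pw ?X x v" for x v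
  proof
    assume "blocking n pm pw ?X x v"
    then have x: "x < n" and v: "v < n" and xv: "pm x v < pm x (?X x)"
      and vx: "pw v x < pw v (wpartner n ?X v)" unfolding blocking_def by auto
    define y where "y = wpartner n ?X v"
    have yn: "y < n" and Xy: "?X y = v" using mfX(2,3)[OF v] y_def by auto
    have f: "pm y (mu y) \<le> pm y v" "pm y (mu' y) \<le> pm y v" "mu y = v \<or> mu' y = v"
      using meet_facts[OF st st' yn] Xy by auto
    show False
    proof (cases "pm x (mu x) \<le> pm x (mu' x)")
      case True
      then have "pm x v < pm x (mu' x)" using xv unfolding meet_def by simp
      then show False using stable_aux[OF st' st x v yn] vx f y_def by auto
    next
      case False
      then have "pm x v < pm x (mu x)" using xv unfolding meet_def by simp
      then show False using stable_aux[OF st st' x v yn] vx f y_def by auto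
    qed
  qed
  then show ?thesis using mX unfolding stable_def by blast
qed

lemma women_better:
  assumes stX: "stable n pm pw X" and mt: "matching n mu"
    and le: "\<And>x. x < n \<Longrightarrow> pm x (mu x) \<le> pm x (X x)" and v: "v < n"
  shows "pw v (wpartner n X v) \<le> pw v (wpartner n mu v)"
proof -
  note mf = match_facts[OF mt]
  note mfX = match_facts[OF mfs[OF stX]]
  define z where "z = wpartner n mu v"
  define y where "y = wpartner n X v"
  have zn: "z < n" and mz: "mu z = v" using mf(2,3)[OF v] z_def by auto
  have yn: "y < n" and Xy: "X y = v" using mfX(2,3)[OF v] y_def by auto
  show ?thesis
  proof (cases "z = y")
    case True then show ?thesis using y_def z_def by simp
  next
    case False
    then have "X z \<noteq> v" using mfX(5)[OF zn yn] Xy by auto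
    then have "pm z (mu z) \<noteq> pm z (X z)" using pm_inj[OF zn mfX(1)[OF zn] mf(1)[OF zn]] mz by metis
    then have "pm z v < pm z (X z)" using le[OF zn] mz by simp
    then have "pw v y \<le> pw v z" using stable_nb[OF stX zn v] y_def by simp
    then show ?thesis using y_def z_def by simp
  qed
qed

end

context SM begin

lemma mod_lt: "i < (l::nat) \<Longrightarrow> x mod l < l"
proof -
  assume "i < l" then have "0 < l" by simp
  then show ?thesis by simp
qed

lemma rot_basic:
  assumes "rotation_in n pm pw mu ps"
  shows "stable n pm pw mu" "ps \<noteq> []" "distinct (map fst ps)"
    "\<And>i. i < length ps \<Longrightarrow> fst (ps ! i) < n \<and> mu (fst (ps ! i)) = snd (ps ! i)"
  using assms unfolding rotation_in_def by auto

lemma rot_step: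
  assumes "rotation_in n pm pw mu ps" "i < length ps"
  shows "pm (fst (ps ! i)) (snd (ps ! i)) < pm (fst (ps ! i)) (snd (ps ! (Suc i mod length ps)))"
    "pw (snd (ps ! (Suc i mod length ps))) (fst (ps ! i))
       < pw (snd (ps ! (Suc i mod length ps))) (wpartner n mu (snd (ps ! (Suc i mod length ps))))"
    "\<And>v. v < n \<Longrightarrow> pm (fst (ps ! i)) (snd (ps ! i)) < pm (fst (ps ! i)) v \<Longrightarrow>
       pw v (fst (ps ! i)) < pw v (wpartner n mu v) \<Longrightarrow>
       pm (fst (ps ! i)) (snd (ps ! (Suc i mod length ps))) \<le> pm (fst (ps ! i)) v"
  using assms unfolding rotation_in_def Let_def by auto

lemma rot_next:
  assumes r: "rotation_in n pm pw mu ps" and i: "i < length ps"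
  shows "Suc i mod length ps < length ps"
    "wpartner n mu (snd (ps ! (Suc i mod length ps))) = fst (ps ! (Suc i mod length ps))"
    "fst (ps ! (Suc i mod length ps)) \<noteq> fst (ps ! i)"
proof -
  show j: "Suc i mod length ps < length ps" using mod_lt[OF i] .
  note b = rot_basic[OF r]
  note mf = match_facts[OF mfs[OF b(1)]]
  show "wpartner n mu (snd (ps ! (Suc i mod length ps))) = fst (ps ! (Suc i mod length ps))"
    using b(4)[OF j] mf(4) by metis
  have "Suc i mod length ps \<noteq> i" using rot_step(1)[OF r i] by auto
  then show "fst (ps ! (Suc i mod length ps)) \<noteq> fst (ps ! i)"
    using b(3) j i by (simp add: nth_eq_iff_index_eq[symmetric])
qed

lemma aon_step:
  assumes r: "rotation_in n pm pw mu ps" and stX: "stable n pm pw X"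
    and le: "\<And>x. x < n \<Longrightarrow> pm x (mu x) \<le> pm x (X x)"
    and j: "j < length ps" and ne: "X (fst (ps ! j)) \<noteq> snd (ps ! j)"
  shows "X (fst (ps ! (Suc j mod length ps))) \<noteq> snd (ps ! (Suc j mod length ps))"
proof
  assume eq: "X (fst (ps ! (Suc j mod length ps))) = snd (ps ! (Suc j mod length ps))"
  note b = rot_basic[OF r]
  note mf = match_facts[OF mfs[OF b(1)]]
  note mfX = match_facts[OF mfs[OF stX]]
  define m where "m = fst (ps ! j)"
  define w where "w = snd (ps ! j)"
  define j' where "j' = Suc j mod length ps"
  define m' where "m' = fst (ps ! j')"
  define w' where "w' = snd (ps ! j')"
  have jl: "j' < length ps" using rot_next(1)[OF r j] j'_def by simp
  have mn: "m < n" and mw: "mu m = w" using b(4)[OF j] m_def w_def by auto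
  have m'n: "m' < n" and mw': "mu m' = w'" using b(4)[OF jl] m'_def w'_def by auto
  have w'n: "w' < n" using mf(1)[OF m'n] mw' by simp
  have mm': "m' \<noteq> m" using rot_next(3)[OF r j] m_def m'_def j'_def by simp
  define v where "v = X m"
  have vn: "v < n" using mfX(1)[OF mn] v_def by simp
  have vw: "v \<noteq> w" using ne m_def w_def v_def by simp
  have wv: "pm m w < pm m v"
    using le[OF mn] mw pm_inj[OF mn vn mf(1)[OF mn]] vw v_def by (metis le_neq_implies_less)
  have s1: "pm m w < pm m w'" using rot_step(1)[OF r j] m_def w_def w'_def j'_def by simp
  have s2: "pw w' m < pw w' (wpartner n mu w')" using rot_step(2)[OF r j] m_def w'_def j'_def by simp
  have s3: "\<And>u. u < n \<Longrightarrow> pm m w < pm m u \<Longrightarrow> pw u m < pw u (wpartner n mu u) \<Longrightarrow> pm m w' \<le> pm m u"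
    using rot_step(3)[OF r j] m_def w_def w'_def j'_def by simp
  have key: "pm m w' \<le> pm m v"
  proof (rule ccontr)
    assume "\<not> pm m w' \<le> pm m v"
    then have "\<not> pw v m < pw v (wpartner n mu v)" using s3[OF vn wv] by auto
    define u where "u = wpartner n mu v"
    have un: "u < n" and mu: "mu u = v" using mf(2,3)[OF vn] u_def by auto
    have um: "u \<noteq> m" using mu mw vw by auto
    have "pw v u \<le> pw v m" using \<open>\<not> pw v m < pw v (wpartner n mu v)\<close> u_def by simp
    then have vum: "pw v u < pw v m" using pw_inj[OF vn un mn] um by (metis le_neq_implies_less)
    have "X u \<noteq> v" using mfX(5)[OF un mn] um v_def by auto
    then have "pm u v < pm u (X u)"
      using le[OF un] mu pm_inj[OF un mfX(1)[OF un] vn] by (metis le_neq_implies_less)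
    moreover have "wpartner n X v = m" using mfX(4)[OF mn] v_def by simp
    ultimately have "blocking n pm pw X u v" unfolding blocking_def using un vn vum by simp
    then show False using stX unfolding stable_def by blast
  qed
  have "X m \<noteq> w'" using eq mfX(5)[OF mn m'n] mm' m'_def w'_def j'_def by auto
  then have "pm m w' < pm m v" using key pm_inj[OF mn w'n vn] v_def by (metis le_neq_implies_less)
  moreover have "wpartner n X w' = m'" using mfX(4)[OF m'n] eq m'_def w'_def j'_def by simp
  moreover have "wpartner n mu w' = m'" using mf(4)[OF m'n] mw' by simp
  ultimately have "blocking n pm pw X m w'" unfolding blocking_def
    using mn w'n s2 v_def by simp
  then show False using stX unfolding stable_def by blast
qed

lemma aon_all:
  assumes r: "rotation_in n pm pw mu ps" and stX: "stable n pm pw X"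
    and le: "\<And>x. x < n \<Longrightarrow> pm x (mu x) \<le> pm x (X x)"
    and j0: "j0 < length ps" and eq0: "X (fst (ps ! j0)) = snd (ps ! j0)"
    and j: "j < length ps"
  shows "X (fst (ps ! j)) = snd (ps ! j)"
proof (rule ccontr)
  assume ne: "X (fst (ps ! j)) \<noteq> snd (ps ! j)"
  let ?l = "length ps"
  have "X (fst (ps ! ((j + d) mod ?l))) \<noteq> snd (ps ! ((j + d) mod ?l))" for d
  proof (induction d)
    case 0 then show ?case using ne j by simp
  next
    case (Suc d)
    have "(j + d) mod ?l < ?l" using mod_lt[OF j] .
    from aon_step[OF r stX le this Suc] show ?case by (simp add: mod_Suc_eq)
  qed
  from this[of "j0 + ?l - j"] have "X (fst (ps ! ((j0 + ?l) mod ?l))) \<noteq> snd (ps ! ((j0 + ?l) mod ?l))"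
    using j by simp
  then show False using eq0 j0 by simp
qed

lemma exposed_meet:
  assumes r: "rotation_in n pm pw mu ps" and stX: "stable n pm pw X"
    and le: "\<And>x. x < n \<Longrightarrow> pm x (mu x) \<le> pm x (X x)"
    and all: "\<And>j. j < length ps \<Longrightarrow> X (fst (ps ! j)) = snd (ps ! j)"
  shows "rotation_in n pm pw X ps"
proof -
  note b = rot_basic[OF r]
  note mf = match_facts[OF mfs[OF b(1)]]
  note mfX = match_facts[OF mfs[OF stX]]
  have wb: "\<And>v. v < n \<Longrightarrow> pw v (wpartner n X v) \<le> pw v (wpartner n mu v)"
    using women_better[OF stX mfs[OF b(1)] le] by blast
  have c: "let m = fst (ps ! i); w = snd (ps ! i); w' = snd (ps ! (Suc i mod length ps)) in
          pm m w < pm m w' \<and> pw w' m < pw w' (wpartner n X w') \<and>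
          (\<forall>v<n. pm m w < pm m v \<and> pw v m < pw v (wpartner n X v) \<longrightarrow> pm m w' \<le> pm m v)"
    if i: "i < length ps" for i
  proof -
    let ?j = "Suc i mod length ps"
    have jl: "?j < length ps" using rot_next(1)[OF r i] .
    have "wpartner n X (snd (ps ! ?j)) = fst (ps ! ?j)"
      using all[OF jl] mfX(4) b(4)[OF jl] by metis
    moreover have "wpartner n mu (snd (ps ! ?j)) = fst (ps ! ?j)" using rot_next(2)[OF r i] .
    ultimately have same: "wpartner n X (snd (ps ! ?j)) = wpartner n mu (snd (ps ! ?j))" by simp
    show ?thesis unfolding Let_def
    proof (intro conjI allI impI)
      show "pm (fst (ps ! i)) (snd (ps ! i)) < pm (fst (ps ! i)) (snd (ps ! ?j))"
        using rot_step(1)[OF r i] .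
      show "pw (snd (ps ! ?j)) (fst (ps ! i)) < pw (snd (ps ! ?j)) (wpartner n X (snd (ps ! ?j)))"
        using rot_step(2)[OF r i] same by simp
      fix v assume v: "v < n" and h: "pm (fst (ps ! i)) (snd (ps ! i)) < pm (fst (ps ! i)) v \<and>
         pw v (fst (ps ! i)) < pw v (wpartner n X v)"
      then have "pw v (fst (ps ! i)) < pw v (wpartner n mu v)" using wb[OF v] by linarith
      then show "pm (fst (ps ! i)) (snd (ps ! ?j)) \<le> pm (fst (ps ! i)) v"
        using rot_step(3)[OF r i v] h by blast
    qed
  qed
  show ?thesis unfolding rotation_in_def
    using stX b(2,3) b(4) all c by auto
qed

lemma determ:
  assumes r: "rotation_in n pm pw X ps" and q: "rotation_in n pm pw X qs"
    and i: "i < length ps" and i': "i' < length qs" and eq: "fst (ps ! i) = fst (qs ! i')"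
  shows "fst (ps ! (Suc i mod length ps)) = fst (qs ! (Suc i' mod length qs))"
proof -
  note b = rot_basic[OF r]
  note bq = rot_basic[OF q]
  note mfX = match_facts[OF mfs[OF b(1)]]
  define x where "x = fst (ps ! i)"
  let ?j = "Suc i mod length ps"
  let ?j' = "Suc i' mod length qs"
  have jl: "?j < length ps" using rot_next(1)[OF r i] .
  have jl': "?j' < length qs" using rot_next(1)[OF q i'] .
  define v1 where "v1 = snd (ps ! ?j)"
  define v2 where "v2 = snd (qs ! ?j')"
  have xn: "x < n" using b(4)[OF i] x_def by simp
  have sw: "snd (ps ! i) = snd (qs ! i')" using b(4)[OF i] bq(4)[OF i'] eq by metis
  have v1n: "v1 < n" using b(4)[OF jl] mfX(1) v1_def by metis
  have v2n: "v2 < n" using bq(4)[OF jl'] mfX(1) v2_def by metis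
  have "pm x v1 \<le> pm x v2"
    using rot_step(3)[OF r i v2n] rot_step(1,2)[OF q i'] eq sw x_def v2_def v1_def by simp
  moreover have "pm x v2 \<le> pm x v1"
    using rot_step(3)[OF q i' v1n] rot_step(1,2)[OF r i] eq sw x_def v2_def v1_def by simp
  ultimately have "v1 = v2" using pm_inj[OF xn v1n v2n] by simp
  then show ?thesis
    using rot_next(2)[OF r i] rot_next(2)[OF q i'] v1_def v2_def by simp
qed

lemma same_set:
  assumes r: "rotation_in n pm pw X ps" and q: "rotation_in n pm pw X qs"
    and p1: "(m, w) \<in> set ps" and p2: "(m, w) \<in> set qs"
  shows "set ps \<subseteq> set qs"
proof
  fix p assume "p \<in> set ps"
  then obtain a where a: "a < length ps" "p = ps ! a" by (auto simp: in_set_conv_nth)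
  obtain i where i: "i < length ps" "ps ! i = (m, w)" using p1 by (auto simp: in_set_conv_nth)
  obtain i' where i': "i' < length qs" "qs ! i' = (m, w)" using p2 by (auto simp: in_set_conv_nth)
  note b = rot_basic[OF r]
  note bq = rot_basic[OF q]
  have orb: "fst (ps ! ((i + d) mod length ps)) = fst (qs ! ((i' + d) mod length qs))" for d
  proof (induction d)
    case 0 then show ?case using i i' by simp
  next
    case (Suc d)
    have "(i + d) mod length ps < length ps" "(i' + d) mod length qs < length qs"
      using mod_lt[OF i(1)] mod_lt[OF i'(1)] by auto
    from determ[OF r q this Suc] show ?case by (simp add: mod_Suc_eq)
  qed
  define d where "d = a + length ps - i"
  have "(i + d) mod length ps = a" using a i d_def by simp
  then have fe: "fst (ps ! a) = fst (qs ! ((i' + d) mod length qs))" using orb[of d] by simp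
  define c where "c = (i' + d) mod length qs"
  have cl: "c < length qs" using mod_lt[OF i'(1)] c_def by auto
  have "ps ! a = qs ! c"
    using b(4)[OF a(1)] bq(4)[OF cl] fe c_def by (metis prod.collapse)
  then show "p \<in> set qs" using a cl by simp
qed

lemma rot_unique:
  assumes r: "rotation_in n pm pw mu ps" and q: "rotation_in n pm pw mu' qs"
    and p1: "(m, w) \<in> set ps" and p2: "(m, w) \<in> set qs"
  shows "set ps = set qs"
proof -
  note b = rot_basic[OF r]
  note bq = rot_basic[OF q]
  define X where "X = meet pm mu mu'"
  have stX: "stable n pm pw X" using meet_stable[OF b(1) bq(1)] X_def by simp
  have le1: "\<And>x. x < n \<Longrightarrow> pm x (mu x) \<le> pm x (X x)" using meet_facts(2)[OF b(1) bq(1)] X_def by simp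
  have le2: "\<And>x. x < n \<Longrightarrow> pm x (mu' x) \<le> pm x (X x)" using meet_facts(3)[OF b(1) bq(1)] X_def by simp
  obtain i where i: "i < length ps" "ps ! i = (m, w)" using p1 by (auto simp: in_set_conv_nth)
  obtain i' where i': "i' < length qs" "qs ! i' = (m, w)" using p2 by (auto simp: in_set_conv_nth)
  have mw: "mu m = w" "m < n" using b(4)[OF i(1)] i(2) by auto
  have mw': "mu' m = w" using bq(4)[OF i'(1)] i'(2) by auto
  have Xm: "X m = w" using mw mw' X_def unfolding meet_def by simp
  have x1: "X (fst (ps ! i)) = snd (ps ! i)" using Xm i(2) by simp
  have x2: "X (fst (qs ! i')) = snd (qs ! i')" using Xm i'(2) by simp
  have e1: "rotation_in n pm pw X ps"
    using exposed_meet[OF r stX le1] aon_all[OF r stX le1 i(1) x1] by blast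
  have e2: "rotation_in n pm pw X qs"
    using exposed_meet[OF q stX le2] aon_all[OF q stX le2 i'(1) x2] by blast
  show ?thesis using same_set[OF e1 e2 p1 p2] same_set[OF e2 e1 p2 p1] by blast
qed

end

context SM begin

lemma pred_idx:
  assumes "j < (l::nat)"
  shows "(j + l - 1) mod l < l" "Suc ((j + l - 1) mod l) mod l = j"
proof -
  show "(j + l - 1) mod l < l" using mod_lt[OF assms] .
  have "Suc ((j + l - 1) mod l) mod l = Suc (j + l - 1) mod l" by (simp add: mod_Suc_eq)
  also have "Suc (j + l - 1) = j + l" using assms by simp
  also have "(j + l) mod l = j" using assms by simp
  finally show "Suc ((j + l - 1) mod l) mod l = j" .
qed

lemma no_rot_k1:
  assumes k1: "k = 1" and r: "rotation_in n pm pw mu ps"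
  shows False
proof -
  note b = rot_basic[OF r]
  note mf = match_facts[OF mfs[OF b(1)]]
  have flat: "\<And>x v. x < n \<Longrightarrow> v < n \<Longrightarrow> pw v x = A x"
    using pw_le_A A_le k1 by (metis add_diff_cancel_right' le_antisym of_nat_1 of_nat_le_iff)
  define f where "f i = A (fst (ps ! i))" for i
  let ?l = "length ps"
  have inc: "f i < f (Suc i mod ?l)" if i: "i < ?l" for i
  proof -
    let ?j = "Suc i mod ?l"
    have jl: "?j < ?l" using rot_next(1)[OF r i] .
    have wn: "snd (ps ! ?j) < n" using b(4)[OF jl] mf(1) by metis
    have "pw (snd (ps ! ?j)) (fst (ps ! i)) < pw (snd (ps ! ?j)) (fst (ps ! ?j))"
      using rot_step(2)[OF r i] rot_next(2)[OF r i] by simp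
    then show ?thesis unfolding f_def using flat wn b(4)[OF i] b(4)[OF jl] by metis
  qed
  have ne: "f ` {..<?l} \<noteq> {}" using b(2) by (auto simp: lessThan_empty_iff)
  have "Min (f ` {..<?l}) \<in> f ` {..<?l}" by (rule Min_in) (use ne in auto)
  then obtain j0 where j0: "j0 < ?l" "f j0 = Min (f ` {..<?l})" by auto
  define i where "i = (j0 + ?l - 1) mod ?l"
  have il: "i < ?l" and si: "Suc i mod ?l = j0" using pred_idx[OF j0(1)] i_def by auto
  have "f j0 \<le> f i" using j0(2) il by simp
  moreover have "f i < f j0" using inc[OF il] si by simp
  ultimately show False by simp
qed

lemma ub_rot:
  assumes k2: "2 \<le> k" and r: "rotation_in n pm pw mu ps" and j: "j < length ps"
  shows "int (pm (fst (ps ! j)) (snd (ps ! (Suc j mod length ps)))) \<le> int (A (fst (ps ! j))) + 2 * int k - 2"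
proof -
  note b = rot_basic[OF r]
  have st: "stable n pm pw mu" using b(1) .
  note mf = match_facts[OF mfs[OF st]]
  define x where "x = fst (ps ! j)"
  define w where "w = snd (ps ! j)"
  define w' where "w' = snd (ps ! (Suc j mod length ps))"
  have jl: "Suc j mod length ps < length ps" using rot_next(1)[OF r j] .
  have xn: "x < n" and mx: "mu x = w" using b(4)[OF j] x_def w_def by auto
  have wn: "w < n" using mf(1)[OF xn] mx by simp
  have w'n: "w' < n" using b(4)[OF jl] mf(1) w'_def by metis
  have s1: "pm x w < pm x w'" using rot_step(1)[OF r j] x_def w_def w'_def by simp
  have s3: "\<And>u. u < n \<Longrightarrow> pm x w < pm x u \<Longrightarrow> pw u x < pw u (wpartner n mu u) \<Longrightarrow> pm x w' \<le> pm x u"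
    using rot_step(3)[OF r j] x_def w_def w'_def by simp
  define r' where "r' = pm x w'"
  have r1: "1 \<le> r'" "r' \<le> n" using pm_range[OF xn w'n] r'_def by auto
  define S where "S = {v. v < n \<and> pm x v < r'}"
  have cS: "card S = r' - 1" unfolding S_def using card_below[OF xn] r1 by auto
  define g where "g v = (if v = w then x else wpartner n mu v)" for v
  define U where "U = g ` S"
  have injU: "inj_on g S"
  proof (rule inj_onI)
    fix a b assume a: "a \<in> S" and bS: "b \<in> S" and e: "g a = g b"
    have an: "a < n" and bn: "b < n" using a bS unfolding S_def by auto
    show "a = b"
    proof (cases "a = w")
      case True
      then show ?thesis
        using e mf(3)[OF bn] mx unfolding g_def by (cases "b = w") auto
    next
      case False
      then show ?thesis
        using e mf(3)[OF bn] mf(3)[OF an] mx unfolding g_def by (cases "b = w") auto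
    qed
  qed
  have cU: "card U = r' - 1" using cS injU card_image U_def by metis
  have Usub: "U \<subseteq> {..<n}" unfolding U_def S_def g_def using mf(2) xn by auto
  have Ap: "1 \<le> A x" using A_pos[OF xn] .
  have "int (card U) \<le> (int (A x) + int k - 2) + int k - 1"
  proof (rule card_men[OF Usub])
    show "0 < n" using xn by auto
    show "0 \<le> int (A x) + int k - 2 + int k - 1" using k2 Ap by linarith
    fix u assume "u \<in> U"
    then obtain v where v: "v \<in> S" "u = g v" unfolding U_def by auto
    have vn: "v < n" and vr: "pm x v < pm x w'" using v(1) unfolding S_def r'_def by auto
    show "\<exists>v<n. int (pw v u) \<le> int (A x) + int k - 2"
    proof (cases "v = w")
      case True
      then have "u = x" using v unfolding g_def by simp
      obtain v0 where "v0 < n" "A x = pw v0 x" using A_ex[OF xn] by auto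
      then show ?thesis using \<open>u = x\<close> k2 by (intro exI[of _ v0]) auto
    next
      case False
      then have u: "u = wpartner n mu v" using v unfolding g_def by simp
      have un: "u < n" using mf(2)[OF vn] u by simp
      have ux: "u \<noteq> x" using u mf(3)[OF vn] mx False by auto
      have "pw v u \<le> pw v x"
      proof (cases "pm x v < pm x w")
        case True
        then show ?thesis using stable_nb[OF st xn vn] mx u by simp
      next
        case False
        then have "pm x w < pm x v" using pm_inj[OF xn vn wn] \<open>v \<noteq> w\<close> by (metis linorder_neqE_nat)
        then have "\<not> pw v x < pw v (wpartner n mu v)" using s3[OF vn] vr by fastforce
        then show ?thesis using u by simp
      qed
      then have "pw v u < pw v x" using pw_inj[OF vn un xn] ux by (metis le_neq_implies_less)
      moreover have "int (pw v x) \<le> int (A x) + int k - 1" using pw_le_A[OF xn vn] .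
      ultimately show ?thesis using vn by (intro exI[of _ v]) auto
    qed
  qed
  then have "int r' \<le> int (A x) + 2 * int k - 2" using cU r1 by linarith
  then show ?thesis using r'_def x_def w'_def by simp
qed

lemma rot_man_window:
  assumes k2: "2 \<le> k" and r: "rotation_in n pm pw mu ps" and p: "(m, w) \<in> set ps"
  shows "w < n" "int (A m) - 2 * int k + 2 \<le> int (pm m w)" "int (pm m w) \<le> int (A m) + 2 * int k - 3"
proof -
  note b = rot_basic[OF r]
  note mf = match_facts[OF mfs[OF b(1)]]
  obtain j where j: "j < length ps" "ps ! j = (m, w)" using p by (auto simp: in_set_conv_nth)
  have mn: "m < n" and mw: "mu m = w" using b(4)[OF j(1)] j(2) by auto
  show "w < n" using mf(1)[OF mn] mw by simp
  show "int (A m) - 2 * int k + 2 \<le> int (pm m w)" using lb_man[OF b(1) mn] mw by simp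
  have "pm m w < pm m (snd (ps ! (Suc j mod length ps)))" using rot_step(1)[OF r j(1)] j(2) by simp
  moreover have "int (pm m (snd (ps ! (Suc j mod length ps)))) \<le> int (A m) + 2 * int k - 2"
    using ub_rot[OF k2 r j(1)] j(2) by simp
  ultimately show "int (pm m w) \<le> int (A m) + 2 * int k - 3" by linarith
qed

lemma rot_woman_window:
  assumes k2: "2 \<le> k" and r: "rotation_in n pm pw mu ps" and p: "(x, w) \<in> set ps"
  shows "x < n" "w < n" "int (B w) - 2 * int k + 3 \<le> int (pw w x)" "int (pw w x) \<le> int (B w) + 2 * int k - 2"
proof -
  note b = rot_basic[OF r]
  note mf = match_facts[OF mfs[OF b(1)]]
  obtain j where j: "j < length ps" "ps ! j = (x, w)" using p by (auto simp: in_set_conv_nth)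
  show xn: "x < n" using b(4)[OF j(1)] j(2) by auto
  have mw: "mu x = w" using b(4)[OF j(1)] j(2) by auto
  show wn: "w < n" using mf(1)[OF xn] mw by simp
  have wx: "wpartner n mu w = x" using mf(4)[OF xn] mw by simp
  show "int (pw w x) \<le> int (B w) + 2 * int k - 2" using ub_woman[OF b(1) wn] wx by simp
  define i where "i = (j + length ps - 1) mod length ps"
  have il: "i < length ps" and si: "Suc i mod length ps = j" using pred_idx[OF j(1)] i_def by auto
  define m' where "m' = fst (ps ! i)"
  have m'n: "m' < n" using b(4)[OF il] m'_def by simp
  have "pw w m' < pw w (wpartner n mu w)" using rot_step(2)[OF r il] si j(2) m'_def by simp
  then have "pw w m' < pw w x" using wx by simp
  moreover have "int (pm m' w) \<le> int (A m') + 2 * int k - 2" using ub_rot[OF k2 r il] si j(2) m'_def by simp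
  moreover have "B w \<le> pm m' w" using B_le[OF m'n wn] .
  moreover have "A m' \<le> pw w m'" using A_le[OF m'n wn] .
  ultimately show "int (B w) - 2 * int k + 3 \<le> int (pw w x)" by linarith
qed

end

context SM begin

lemma rot_count_man:
  assumes m: "m < n"
  shows "int (card {R. rotation n pm pw R \<and> m \<in> fst ` R}) \<le> 5 * int k - 5"
proof (cases "k = 1")
  case True
  have e: "{R. rotation n pm pw R \<and> m \<in> fst ` R} = {}"
    using no_rot_k1[OF True] unfolding rotation_def by blast
  show ?thesis unfolding e using True by simp
next
  case False
  then have k2: "2 \<le> k" using k_pos[OF m] by simp
  let ?Rot = "{R. rotation n pm pw R \<and> m \<in> fst ` R}"
  define phi where "phi R = (SOME w. (m, w) \<in> R)" for R :: "(nat \<times> nat) set"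
  have mem: "(m, phi R) \<in> R" if "R \<in> ?Rot" for R
  proof -
    from that obtain w where "(m, w) \<in> R" by force
    then show ?thesis unfolding phi_def by (rule someI)
  qed
  have win: "phi R < n \<and> int (pm m (phi R)) \<in> {int (A m) - 2 * int k + 2 .. int (A m) + 2 * int k - 3}"
    if R: "R \<in> ?Rot" for R
  proof -
    obtain mu ps where r: "rotation_in n pm pw mu ps" and s: "set ps = R"
      using R unfolding rotation_def by auto
    have "(m, phi R) \<in> set ps" using mem[OF R] s by simp
    then show ?thesis using rot_man_window[OF k2 r] by auto
  qed
  let ?g = "\<lambda>R. int (pm m (phi R))"
  have inj: "inj_on ?g ?Rot"
  proof (rule inj_onI)
    fix R1 R2 assume R1: "R1 \<in> ?Rot" and R2: "R2 \<in> ?Rot" and e: "?g R1 = ?g R2"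
    have "phi R1 = phi R2" using pm_inj[OF m] win[OF R1] win[OF R2] e by simp
    then have p1: "(m, phi R1) \<in> R1" and p2: "(m, phi R1) \<in> R2" using mem[OF R1] mem[OF R2] by auto
    obtain mu ps where r: "rotation_in n pm pw mu ps" and s: "set ps = R1"
      using R1 unfolding rotation_def by auto
    obtain mu' qs where q: "rotation_in n pm pw mu' qs" and s': "set qs = R2"
      using R2 unfolding rotation_def by auto
    show "R1 = R2" using rot_unique[OF r q] p1 p2 s s' by simp
  qed
  have sub: "?g ` ?Rot \<subseteq> {int (A m) - 2 * int k + 2 .. int (A m) + 2 * int k - 3}"
    using win by blast
  have "card ?Rot \<le> card {int (A m) - 2 * int k + 2 .. int (A m) + 2 * int k - 3}"
    by (rule card_inj_on_le[OF inj sub]) auto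
  then show ?thesis using k2 by auto
qed

lemma rot_count_woman:
  assumes w: "w < n"
  shows "int (card {R. rotation n pm pw R \<and> w \<in> snd ` R}) \<le> 5 * int k - 5"
proof (cases "k = 1")
  case True
  have e: "{R. rotation n pm pw R \<and> w \<in> snd ` R} = {}"
    using no_rot_k1[OF True] unfolding rotation_def by blast
  show ?thesis unfolding e using True by simp
next
  case False
  then have k2: "2 \<le> k" using k_pos[OF w] by simp
  let ?Rot = "{R. rotation n pm pw R \<and> w \<in> snd ` R}"
  define phi where "phi R = (SOME x. (x, w) \<in> R)" for R :: "(nat \<times> nat) set"
  have mem: "(phi R, w) \<in> R" if "R \<in> ?Rot" for R
  proof -
    from that obtain x where "(x, w) \<in> R" by force
    then show ?thesis unfolding phi_def by (rule someI)
  qed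
  have win: "phi R < n \<and> int (pw w (phi R)) \<in> {int (B w) - 2 * int k + 3 .. int (B w) + 2 * int k - 2}"
    if R: "R \<in> ?Rot" for R
  proof -
    obtain mu ps where r: "rotation_in n pm pw mu ps" and s: "set ps = R"
      using R unfolding rotation_def by auto
    have "(phi R, w) \<in> set ps" using mem[OF R] s by simp
    then show ?thesis using rot_woman_window[OF k2 r] by auto
  qed
  let ?g = "\<lambda>R. int (pw w (phi R))"
  have inj: "inj_on ?g ?Rot"
  proof (rule inj_onI)
    fix R1 R2 assume R1: "R1 \<in> ?Rot" and R2: "R2 \<in> ?Rot" and e: "?g R1 = ?g R2"
    have "phi R1 = phi R2" using pw_inj[OF w] win[OF R1] win[OF R2] e by simp
    then have p1: "(phi R1, w) \<in> R1" and p2: "(phi R1, w) \<in> R2" using mem[OF R1] mem[OF R2] by auto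
    obtain mu ps where r: "rotation_in n pm pw mu ps" and s: "set ps = R1"
      using R1 unfolding rotation_def by auto
    obtain mu' qs where q: "rotation_in n pm pw mu' qs" and s': "set qs = R2"
      using R2 unfolding rotation_def by auto
    show "R1 = R2" using rot_unique[OF r q] p1 p2 s s' by simp
  qed
  have sub: "?g ` ?Rot \<subseteq> {int (B w) - 2 * int k + 3 .. int (B w) + 2 * int k - 2}"
    using win by blast
  have "card ?Rot \<le> card {int (B w) - 2 * int k + 3 .. int (B w) + 2 * int k - 2}"
    by (rule card_inj_on_le[OF inj sub]) auto
  then show ?thesis using k2 by auto
qed

end

theorem corollary7p5:
  fixes n k :: nat and pm pw :: "nat \<Rightarrow> nat \<Rightarrow> nat"
  assumes "pref_profile n pm" and "pref_profile n pw" and "k_range n pm pw k"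
  shows "(\<forall>m<n. int (card (stable_partners_man n pm pw m)) \<le> 5 * int k - 4 \<and>
                 int (card {R. rotation n pm pw R \<and> m \<in> fst ` R}) \<le> 5 * int k - 5) \<and>
         (\<forall>w<n. int (card (stable_partners_woman n pm pw w)) \<le> 5 * int k - 4 \<and>
                 int (card {R. rotation n pm pw R \<and> w \<in> snd ` R}) \<le> 5 * int k - 5)"
proof -
  interpret SM n pm pw k by (rule SM.intro) (rule assms)+
  show ?thesis using sp_man sp_woman rot_count_man rot_count_woman by blast
qed


end
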